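(* Let $F=\{F_n\}_{n\in\mathbb{Z}}$ be a sequence with values in $\mathbb{D}$ such that $F_n=0$ for $n<n_0$ (for some $n_0\in\mathbb{Z}$) and $F_n\to0$ as $n\to+\infty$. Then there is an absolute constant $C$ such that, for all sufficiently large $n$, $$\big|\arg\mathfrak{a}^{( * )}(z,F^{\langle n\rangle})-\arg\mathfrak{a}^{( * )}(z,F^{\langle n-1\rangle})\big|\leqslant C|F_n|\quad\text{uniformly in }z\in\overline{\mathbb{D}},$$ and in particular this difference tends to $0$ uniformly in $z\in\overline{\mathbb{D}}$ as $n\to\infty$.
   Context: $\mathbb{T}$, $\mathbb{D}$ denote the unit circle and open unit disc; $m$ is normalized Lebesgue measure on $\mathbb{T}$. $F^{\langle N\rangle}_n=F_n\chi_{|n|\leqslant N}$. For a finitely supported $G$ with values in $\mathbb{D}$: $\widetilde X_n(z)=I$ below the support, $\widetilde X_n=(1-|G_n|^2)^{-1/2}\begin{pmatrix}1&\overline{G_n}z^{-n}\\ G_nz^n&1\end{pmatrix}\widetilde X_{n-1}$, and above the support $\widetilde X_n=\begin{pmatrix}\mathfrak{a}(z,G)&\mathfrak{b}^{( * )}(z,G)\\ \mathfrak{b}(z,G)&\mathfrak{a}^{( * )}(z,G)\end{pmatrix}$ with $f^{( * )}(z)=\overline{f(\bar z^{-1})}$. The function $\mathfrak{a}^{( * )}(\cdot,G)$ is analytic in $\mathbb{D}$, continuous and nonvanishing on $\overline{\mathbb{D}}$, outer, with $\mathfrak{a}^{( * )}(0,G)>0$; its argument $\arg\mathfrak{a}^{(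 * )}(z,G)$ is the continuous branch on $\overline{\mathbb{D}}$ with value $0$ at $z=0$, i.e. $\frac12\int_{\mathbb{T}}\operatorname{Im}\frac{\xi+z}{\xi-z}\log(1+|\mathfrak{b}(\xi,G)|^2)\,dm(\xi)$ in $\mathbb{D}$, extended to $\mathbb{T}$ by the corresponding principal-value (Hilbert transform) integral. *)

theory Defs
  imports "HOL-Analysis.Analysis"
begin

text \<open>2x2 complex matrices as quadruples (a,b,c,d) standing for [[a,b],[c,d]].\<close>
type_synonym m2 = "complex \<times> complex \<times> complex \<times> complex"

definition m2_mult :: "m2 \<Rightarrow> m2 \<Rightarrow> m2" where
  "m2_mult X Y = (case X of (a,b,c,d) \<Rightarrow> case Y of (e,f,g,h) \<Rightarrow>
      (a*e + b*g, a*f + b*h, c*e + d*g, c*f + d*h))"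

definition m2_id :: m2 where "m2_id = (1,0,0,1)"

definition nlft_factor :: "(int \<Rightarrow> complex) \<Rightarrow> int \<Rightarrow> complex \<Rightarrow> m2" where
  "nlft_factor G n z =
     (let s = complex_of_real (1 / sqrt (1 - (cmod (G n))\<^sup>2)) in
      (s, s * cnj (G n) * z powi (-n), s * G n * z powi n, s))"

definition supp_bound :: "(int \<Rightarrow> complex) \<Rightarrow> int" where
  "supp_bound G = (if {n. G n \<noteq> 0} = {} then 0 else Max (abs ` {n. G n \<noteq> 0}))"

text \<open>The transfer matrix above the support: X = M_N \<dots> M_(-N), with N a bound
  of the support (factors outside the support are the identity).\<close>
definition nlft_matrix :: "(int \<Rightarrow> complex) \<Rightarrow> complex \<Rightarrow> m2" where
  "nlft_matrix G z =
     foldl (\<lambda>X n. m2_mult (nlft_factor G n z) X) m2_id [- supp_bound G .. supp_bound G]"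

text \<open>a(z,G) = entry (1,1), b(z,G) = entry (2,1), a^(*)(z,G) = entry (2,2),
  for z \<noteq> 0; a^(*) is extended to z = 0 by its limit (it is a polynomial in z).\<close>
definition nlft_a :: "(int \<Rightarrow> complex) \<Rightarrow> complex \<Rightarrow> complex" where
  "nlft_a G z = (case nlft_matrix G z of (a,b,c,d) \<Rightarrow> a)"

definition nlft_b :: "(int \<Rightarrow> complex) \<Rightarrow> complex \<Rightarrow> complex" where
  "nlft_b G z = (case nlft_matrix G z of (a,b,c,d) \<Rightarrow> c)"

definition nlft_astar_raw :: "(int \<Rightarrow> complex) \<Rightarrow> complex \<Rightarrow> complex" where
  "nlft_astar_raw G z = (case nlft_matrix G z of (a,b,c,d) \<Rightarrow> d)"

definition nlft_astar :: "(int \<Rightarrow> complex) \<Rightarrow> complex \<Rightarrow> complex" where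
  "nlft_astar G z = (if z = 0 then Lim (at 0) (nlft_astar_raw G) else nlft_astar_raw G z)"

text \<open>arg a^(*)(z,G): the continuous branch of the argument on the closed unit disc
  with value 0 at z = 0 (set to 0 outside the closed disc to make it unique).\<close>
definition arg_astar :: "(int \<Rightarrow> complex) \<Rightarrow> complex \<Rightarrow> real" where
  "arg_astar G = (THE \<theta>. continuous_on (cball 0 1) \<theta> \<and> \<theta> 0 = 0 \<and>
      (\<forall>w\<in>cball 0 1. nlft_astar G w = complex_of_real (cmod (nlft_astar G w)) * cis (\<theta> w)) \<and>
      (\<forall>w. w \<notin> cball 0 1 \<longrightarrow> \<theta> w = 0))"

definition trunc :: "(int \<Rightarrow> complex) \<Rightarrow> int \<Rightarrow> int \<Rightarrow> complex" where
  "trunc F N n = (if \<bar>n\<bar> \<le> N then F n else 0)"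

end

theory Submission
  imports Defs
begin

definition sc :: "(int \<Rightarrow> complex) \<Rightarrow> int \<Rightarrow> complex" where
  "sc G i = complex_of_real (1 / sqrt (1 - (cmod (G i))\<^sup>2))"

definition stp :: "(int \<Rightarrow> complex) \<Rightarrow> complex \<Rightarrow> complex \<times> complex \<Rightarrow> int \<Rightarrow> complex \<times> complex" where
  "stp G z p i = (sc G i * (fst p + G i * snd p), sc G i * z * (snd p + cnj (G i) * fst p))"

abbreviation mstep :: "(int \<Rightarrow> complex) \<Rightarrow> complex \<Rightarrow> m2 \<Rightarrow> int \<Rightarrow> m2" where
  "mstep G z \<equiv> (\<lambda>X n. m2_mult (nlft_factor G n z) X)"

lemma factor_eq: "nlft_factor G n z = (sc G n, sc G n * cnj (G n) * z powi (-n), sc G n * G n * z powi n, sc G n)"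
  by (simp add: nlft_factor_def sc_def Let_def)

lemma step_rel:
  assumes "z \<noteq> 0"
  shows "stp G z (snd (snd (snd X)), z powi a * fst (snd X)) a =
         (snd (snd (snd (mstep G z X a))), z powi (a+1) * fst (snd (mstep G z X a)))"
proof -
  obtain x1 x2 x3 x4 where X: "X = (x1,x2,x3,x4)" by (cases X) auto
  have e1: "z powi (a+1) = z powi a * z" using assms by (simp add: power_int_add)
  have e2: "z powi a * z powi (-a) = 1" using assms by (simp add: power_int_minus field_simps)
  have "z powi (a+1) * (sc G a * cnj (G a) * z powi (-a) * x4) = sc G a * z * (cnj (G a) * x4)"
    using e1 e2 by (metis (no_types, lifting) mult.assoc mult.commute mult.left_commute mult_1_right)
  then show ?thesis using e1 e2
    by (simp add: X stp_def m2_mult_def factor_eq algebra_simps)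
qed

lemma fold_rel:
  assumes "z \<noteq> 0" "a \<le> b + 1"
  shows "foldl (stp G z) (snd (snd (snd X)), z powi a * fst (snd X)) [a..b] =
         (snd (snd (snd (foldl (mstep G z) X [a..b]))), z powi (b+1) * fst (snd (foldl (mstep G z) X [a..b])))"
  using assms(2)
proof (induction a arbitrary: X rule: int_le_induct)
  case base
  then show ?case by simp
next
  case (step i)
  have "[i - 1..b] = (i - 1) # [i..b]" using step.hyps by (simp add: upto_rec1)
  then show ?case using step.IH[of "mstep G z X (i - 1)"] step_rel[OF assms(1), of G X "i - 1"]
    by simp
qed

lemma fold_id:
  assumes "\<forall>i\<in>set xs. G i = 0"
  shows "foldl (mstep G z) X xs = X"
  using assms
proof (induction xs arbitrary: X)
  case Nil then show ?case by simp
next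
  case (Cons x xs)
  obtain x1 x2 x3 x4 where X: "X = (x1,x2,x3,x4)" by (cases X) auto
  have "mstep G z X x = X" using Cons.prems by (simp add: X m2_mult_def nlft_factor_def)
  then show ?case using Cons by simp
qed

lemma fold_cont:
  assumes "continuous_on UNIV p"
  shows "continuous_on UNIV (\<lambda>z. foldl (stp G z) (p z) xs)"
  using assms
proof (induction xs arbitrary: p)
  case Nil then show ?case by simp
next
  case (Cons x xs)
  have "continuous_on UNIV (\<lambda>z. stp G z (p z) x)"
    unfolding stp_def by (intro continuous_intros Cons.prems)
  then show ?case using Cons.IH by simp
qed

lemma sc_pos: "cmod (G i) < 1 \<Longrightarrow> sc G i = complex_of_real (1 / sqrt (1 - (cmod (G i))\<^sup>2)) \<and> 1 / sqrt (1 - (cmod (G i))\<^sup>2) > 0"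
  by (simp add: sc_def abs_square_less_1)

lemma key_ineq:
  fixes d b z :: complex
  assumes "cmod b < cmod d" "cmod (G i) < 1" "cmod z \<le> 1"
  shows "cmod (sc G i * z * (b + cnj (G i) * d)) < cmod (sc G i * (d + G i * b))"
proof -
  define g where "g = G i"
  have id: "(cmod (d + g*b))\<^sup>2 - (cmod (b + cnj g * d))\<^sup>2 = (1 - (cmod g)\<^sup>2) * ((cmod d)\<^sup>2 - (cmod b)\<^sup>2)"
    unfolding cmod_power2 by (simp add: algebra_simps power2_eq_square)
  have "(cmod b)\<^sup>2 < (cmod d)\<^sup>2" using assms(1) by (simp add: power_strict_mono)
  moreover have "(cmod g)\<^sup>2 < 1" using assms(2) by (simp add: abs_square_less_1 g_def)
  ultimately have "(cmod (b + cnj g * d))\<^sup>2 < (cmod (d + g*b))\<^sup>2" using id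
    by (smt (verit) mult_pos_pos)
  then have lt: "cmod (b + cnj g * d) < cmod (d + g*b)"
    using power2_less_imp_less by fastforce
  obtain r where r: "sc G i = complex_of_real r" "r > 0" using sc_pos[of G i, OF assms(2)] by blast
  have "cmod (sc G i * z * (b + cnj g * d)) = r * cmod z * cmod (b + cnj g * d)"
    using r by (simp add: norm_mult)
  also have "\<dots> \<le> r * cmod (b + cnj g * d)"
    using assms(3) r(2) by (simp add: mult_right_le_one_le mult_le_cancel_left1 mult_right_mono)
  also have "\<dots> < r * cmod (d + g*b)" using lt r(2) by simp
  also have "\<dots> = cmod (sc G i * (d + g * b))" using r by (simp add: norm_mult)
  finally show ?thesis by (simp add: g_def)
qed

lemma fold_inv:
  assumes "cmod (snd p) < cmod (fst p)" "\<forall>i. cmod (G i) < 1" "cmod z \<le> 1"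
  shows "cmod (snd (foldl (stp G z) p xs)) < cmod (fst (foldl (stp G z) p xs))"
  using assms(1)
proof (induction xs arbitrary: p)
  case Nil then show ?case by simp
next
  case (Cons x xs)
  have "cmod (snd (stp G z p x)) < cmod (fst (stp G z p x))"
    unfolding stp_def using key_ineq[OF Cons.prems, of G x z] assms(2,3) by simp
  then show ?case using Cons.IH by simp
qed

lemma fold_zero:
  assumes "\<forall>i. cmod (G i) < 1" "r > 0"
  shows "\<exists>r'>0. foldl (stp G 0) (complex_of_real r, 0) xs = (complex_of_real r', 0)"
  using assms(2)
proof (induction xs arbitrary: r)
  case Nil then show ?case by auto
next
  case (Cons x xs)
  obtain t where t: "sc G x = complex_of_real t" "t > 0" using sc_pos assms(1) by blast
  have "stp G 0 (complex_of_real r, 0) x = (complex_of_real (t*r), 0)"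
    using t by (simp add: stp_def)
  then show ?case using Cons.IH[of "t*r"] Cons.prems t by simp
qed


lemma supp_bound_props:
  assumes "{i. G i \<noteq> 0} \<subseteq> {-M..M}" "0 \<le> M"
  shows "0 \<le> supp_bound G \<and> supp_bound G \<le> M \<and> (\<forall>i. G i \<noteq> 0 \<longrightarrow> \<bar>i\<bar> \<le> supp_bound G)"
proof (cases "{i. G i \<noteq> 0} = {}")
  case True then show ?thesis using assms by (simp add: supp_bound_def)
next
  case False
  have fin: "finite {i. G i \<noteq> 0}" using assms(1) finite_subset by blast
  have sb: "supp_bound G = Max (abs ` {i. G i \<noteq> 0})" using False unfolding supp_bound_def by presburger
  have ge: "\<forall>i. G i \<noteq> 0 \<longrightarrow> \<bar>i\<bar> \<le> supp_bound G" using fin sb by auto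
  have "supp_bound G \<le> M" unfolding sb using fin False assms(1) by (subst Max_le_iff) (auto simp: abs_le_iff subset_iff)
  moreover have "0 \<le> supp_bound G" using ge False by force
  ultimately show ?thesis using ge by blast
qed

lemma matrix_pad:
  assumes "{i. G i \<noteq> 0} \<subseteq> {-M..M}" "0 \<le> M"
  shows "nlft_matrix G z = foldl (mstep G z) m2_id [-M..M]"
proof -
  define S where "S = supp_bound G"
  have p: "0 \<le> S" "S \<le> M" "\<forall>i. G i \<noteq> 0 \<longrightarrow> \<bar>i\<bar> \<le> S" using supp_bound_props[OF assms] S_def by auto
  have "[-M..M] = [-M..-S-1] @ [-S..M]" using p by (simp add: upto_split1)
  moreover have "[-S..M] = [-S..S] @ [S+1..M]" using p by (simp add: upto_split2)
  ultimately have sp: "[-M..M] = [-M..-S-1] @ [-S..S] @ [S+1..M]" by simp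
  have z1: "\<forall>i\<in>set [-M..-S-1]. G i = 0" using p(3) by force
  have z2: "\<forall>i\<in>set [S+1..M]. G i = 0" using p(3) by force
  show ?thesis unfolding sp foldl_append fold_id[OF z1] fold_id[OF z2]
    by (simp add: nlft_matrix_def S_def)
qed

lemma raw_eq:
  assumes "{i. G i \<noteq> 0} \<subseteq> {-M..M}" "0 \<le> M" "z \<noteq> 0"
  shows "nlft_astar_raw G z = fst (foldl (stp G z) (1, 0) [-M..M])"
proof -
  have "foldl (stp G z) (snd (snd (snd m2_id)), z powi (-M) * fst (snd m2_id)) [-M..M] =
         (snd (snd (snd (foldl (mstep G z) m2_id [-M..M]))), z powi (M+1) * fst (snd (foldl (mstep G z) m2_id [-M..M])))"
    by (rule fold_rel) (use assms in auto)
  then show ?thesis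
    by (simp add: m2_id_def nlft_astar_raw_def matrix_pad[OF assms(1,2)] split: prod.splits)
qed

lemma astar_eq:
  assumes "{i. G i \<noteq> 0} \<subseteq> {-M..M}" "0 \<le> M"
  shows "nlft_astar G z = fst (foldl (stp G z) (1, 0) [-M..M])"
proof (cases "z = 0")
  case False then show ?thesis using raw_eq[OF assms] by (simp add: nlft_astar_def)
next
  case True
  define D where "D = (\<lambda>z. fst (foldl (stp G z) (1, 0) [-M..M]))"
  have "continuous_on UNIV (\<lambda>z. foldl (stp G z) (1, 0) [-M..M])"
    by (rule fold_cont) simp
  then have "continuous_on UNIV D" unfolding D_def by (intro continuous_intros)
  then have "(D \<longlongrightarrow> D 0) (at 0)" by (simp add: continuous_on_def)
  moreover have "\<forall>\<^sub>F w in at 0. D w = nlft_astar_raw G w"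
    using raw_eq[OF assms] unfolding D_def eventually_at_filter by simp
  ultimately have "(nlft_astar_raw G \<longlongrightarrow> D 0) (at 0)" using tendsto_cong by blast
  then have "Lim (at 0) (nlft_astar_raw G) = D 0" by (simp add: tendsto_Lim)
  then show ?thesis using True by (simp add: nlft_astar_def D_def)
qed


definition Pa :: "(complex \<Rightarrow> complex) \<Rightarrow> (complex \<Rightarrow> real) \<Rightarrow> bool" where
  "Pa f \<theta> \<longleftrightarrow> continuous_on (cball 0 1) \<theta> \<and> \<theta> 0 = 0 \<and>
      (\<forall>w\<in>cball 0 1. f w = complex_of_real (cmod (f w)) * cis (\<theta> w)) \<and>
      (\<forall>w. w \<notin> cball 0 1 \<longrightarrow> \<theta> w = 0)"

lemma arg_astar_Pa: "arg_astar G = (THE \<theta>. Pa (nlft_astar G) \<theta>)"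
  unfolding arg_astar_def Pa_def by simp

lemma Pa_uniq:
  assumes nz: "\<forall>w\<in>cball 0 1. f w \<noteq> 0" and P1: "Pa f \<theta>1" and P2: "Pa f \<theta>2"
  shows "\<theta>1 = \<theta>2"
proof -
  define h where "h w = (\<theta>1 w - \<theta>2 w) / (2*pi)" for w
  have hint: "h w \<in> \<int>" if w: "w \<in> cball 0 1" for w
  proof -
    have "complex_of_real (cmod (f w)) * cis (\<theta>1 w) = complex_of_real (cmod (f w)) * cis (\<theta>2 w)"
      using P1 P2 w unfolding Pa_def by metis
    then have "cis (\<theta>1 w) = cis (\<theta>2 w)" using nz w by simp
    then have "sin (\<theta>1 w) = sin (\<theta>2 w) \<and> cos (\<theta>1 w) = cos (\<theta>2 w)"
      by (metis cis.sel)
    then obtain n :: int where "\<theta>1 w = \<theta>2 w + 2 * pi * n" using sin_cos_eq_iff by blast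
    then have "h w = of_int n" by (simp add: h_def)
    then show ?thesis by simp
  qed
  have hc: "continuous_on (cball 0 1) h"
    using P1 P2 unfolding Pa_def h_def by (intro continuous_intros) auto
  have "h constant_on cball 0 1"
  proof (rule continuous_discrete_range_constant[OF _ hc])
    show "connected (cball (0::complex) 1)" by simp
    fix x assume x: "x \<in> cball (0::complex) 1"
    show "\<exists>e>0. \<forall>y. y \<in> cball 0 1 \<and> h y \<noteq> h x \<longrightarrow> e \<le> norm (h y - h x)"
    proof (intro exI[of _ 1] conjI allI impI)
      fix y assume y: "y \<in> cball 0 1 \<and> h y \<noteq> h x"
      obtain a where a: "h x = of_int a" using hint[OF x] Ints_cases by blast
      obtain b where b: "h y = of_int b" using hint y Ints_cases by blast
      have "b \<noteq> a" using y a b by auto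
      then have "1 \<le> \<bar>b - a\<bar>" by linarith
      then show "1 \<le> norm (h y - h x)" using a b
        by (metis of_int_1 of_int_abs of_int_diff of_int_le_iff real_norm_def)
    qed simp
  qed
  then obtain c where c: "\<forall>w\<in>cball 0 1. h w = c" unfolding constant_on_def by blast
  have "h 0 = 0" using P1 P2 unfolding Pa_def h_def by simp
  then have "c = 0" using c by force
  then have "\<forall>w\<in>cball 0 1. \<theta>1 w = \<theta>2 w" using c unfolding h_def by simp
  then show ?thesis using P1 P2 unfolding Pa_def by (metis ext)
qed

lemma Pa_exist:
  assumes nz: "\<forall>w\<in>cball 0 1. f w \<noteq> 0" and fc: "continuous_on (cball 0 1) f"
    and f0: "f 0 = complex_of_real r" "r > 0"
  shows "\<exists>\<theta>. Pa f \<theta>"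
proof -
  have "Borsukian (cball (0::complex) 1)"
    by (intro contractible_imp_Borsukian convex_imp_contractible) simp
  then obtain g where gc: "continuous_on (cball 0 1) g" and fg: "\<forall>x\<in>cball 0 1. f x = exp (g x)"
  proof -
    have "f \<in> cball 0 1 \<rightarrow> - {0}" using nz by auto
    then show ?thesis using that \<open>Borsukian (cball (0::complex) 1)\<close> fc
      unfolding Borsukian_continuous_logarithm by blast
  qed
  have ex: "exp z = complex_of_real (exp (Re z)) * cis (Im z)" for z
    by (simp add: exp_eq_polar)
  have "complex_of_real (exp (Re (g 0))) * cis (Im (g 0)) = complex_of_real r"
    using fg f0 ex by (metis centre_in_cball zero_le_one)
  then have "cis (Im (g 0)) = complex_of_real (r / exp (Re (g 0)))"
    by (simp add: field_simps)
  moreover have "cmod (cis (Im (g 0))) = 1" by simp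
  ultimately have c1: "cis (Im (g 0)) = 1" using f0(2)
    by (metis abs_of_pos divide_pos_pos exp_gt_zero norm_of_real of_real_1)
  define \<theta> where "\<theta> w = (if w \<in> cball 0 1 then Im (g w) - Im (g 0) else 0)" for w
  have "Pa f \<theta>"
    unfolding Pa_def
  proof (intro conjI ballI allI impI)
    show "continuous_on (cball 0 1) \<theta>"
      by (rule continuous_on_cong[THEN iffD1, OF refl _ continuous_on_diff[OF continuous_on_Im[OF gc] continuous_on_const]])
         (simp add: \<theta>_def)
    show "\<theta> 0 = 0" by (simp add: \<theta>_def)
    fix w assume w: "w \<in> cball (0::complex) 1"
    have "cis (\<theta> w) = cis (Im (g w))" using c1 w by (simp add: \<theta>_def flip: cis_divide)
    moreover have "cmod (f w) = exp (Re (g w))" using fg w by simp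
    ultimately show "f w = complex_of_real (cmod (f w)) * cis (\<theta> w)" using fg w ex by simp
  next
    fix w :: complex assume "w \<notin> cball 0 1" then show "\<theta> w = 0" by (simp add: \<theta>_def)
  qed
  then show ?thesis by blast
qed

lemma The_Pa:
  assumes "\<forall>w\<in>cball 0 1. f w \<noteq> 0" "Pa f \<theta>"
  shows "(THE \<theta>. Pa f \<theta>) = \<theta>"
  using assms Pa_uniq by blast


lemma arg_bound:
  assumes fc: "continuous_on (cball 0 1) f" and bc: "continuous_on (cball 0 1) bt"
    and lt: "\<forall>w\<in>cball 0 1. cmod (bt w) < cmod (f w)"
    and f0: "f 0 = complex_of_real r" "r > 0" and b0: "bt 0 = 0"
    and f': "\<forall>w\<in>cball 0 1. f' w = complex_of_real t * (f w + g * bt w)" and t: "t > 0"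
    and g: "cmod g < 1/2"
  shows "\<forall>w\<in>cball 0 1. \<bar>(THE \<theta>. Pa f' \<theta>) w - (THE \<theta>. Pa f \<theta>) w\<bar> \<le> 2 * cmod g"
proof -
  have nz: "\<forall>w\<in>cball 0 1. f w \<noteq> 0" using lt by (metis norm_ge_zero norm_zero not_less)
  obtain \<theta> where P: "Pa f \<theta>" using Pa_exist[OF nz fc f0] by blast
  have T: "(THE \<theta>. Pa f \<theta>) = \<theta>" by (rule The_Pa[OF nz P])
  define u where "u w = g * bt w / f w" for w
  have ule: "cmod (u w) \<le> cmod g" if "w \<in> cball 0 1" for w
  proof -
    have "cmod (u w) = cmod g * (cmod (bt w) / cmod (f w))" by (simp add: u_def norm_mult norm_divide)
    also have "\<dots> \<le> cmod g * 1"
      using lt that nz by (intro mult_left_mono) (auto simp: less_imp_le)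
    finally show ?thesis by simp
  qed
  define q where "q w = 1 + u w" for w
  have qre: "Re (q w) > 0" if "w \<in> cball 0 1" for w
  proof -
    have "\<bar>Re (u w)\<bar> \<le> cmod (u w)" by (rule abs_Re_le_cmod)
    then show ?thesis using ule[OF that] g by (simp add: q_def)
  qed
  have qnp: "q w \<notin> \<real>\<^sub>\<le>\<^sub>0" if "w \<in> cball 0 1" for w
    using qre[OF that] by (auto simp: complex_nonpos_Reals_iff)
  have qnz: "q w \<noteq> 0" if "w \<in> cball 0 1" for w using qre[OF that] by auto
  have f'q: "f' w = complex_of_real t * f w * q w" if "w \<in> cball 0 1" for w
    using f' that nz by (simp add: q_def u_def field_simps)
  have nz': "\<forall>w\<in>cball 0 1. f' w \<noteq> 0" using f'q nz qnz t by simp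
  have qc: "continuous_on (cball 0 1) q"
    unfolding q_def u_def using fc bc nz by (intro continuous_intros) auto
  define \<theta>' where "\<theta>' w = (if w \<in> cball 0 1 then \<theta> w + Arg (q w) else 0)" for w
  have P': "Pa f' \<theta>'"
    unfolding Pa_def
  proof (intro conjI ballI allI impI)
    have "continuous_on (cball 0 1) (\<lambda>w. \<theta> w + Arg (q w))"
      using P qc qnp unfolding Pa_def by (intro continuous_intros) auto
    then show "continuous_on (cball 0 1) \<theta>'"
      by (rule continuous_on_cong[THEN iffD1, rotated 2]) (auto simp: \<theta>'_def)
    show "\<theta>' 0 = 0" using P b0 by (simp add: \<theta>'_def Pa_def q_def u_def)
    fix w :: complex assume w: "w \<in> cball 0 1"
    have fw: "f w = complex_of_real (cmod (f w)) * cis (\<theta> w)" using P w unfolding Pa_def by blast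
    have qw: "q w = complex_of_real (cmod (q w)) * cis (Arg (q w))"
      by (metis rcis_cmod_Arg rcis_def)
    have "f' w = complex_of_real t * (complex_of_real (cmod (f w)) * cis (\<theta> w)) *
                 (complex_of_real (cmod (q w)) * cis (Arg (q w)))"
      using f'q[OF w] fw qw by metis
    also have "\<dots> = complex_of_real (t * cmod (f w) * cmod (q w)) * cis (\<theta> w + Arg (q w))"
      by (simp add: cis_mult[symmetric] algebra_simps)
    also have "t * cmod (f w) * cmod (q w) = cmod (f' w)"
      using f'q[OF w] t by (simp add: norm_mult)
    finally show "f' w = complex_of_real (cmod (f' w)) * cis (\<theta>' w)" using w by (simp add: \<theta>'_def)
  next
    fix w :: complex assume "w \<notin> cball 0 1" then show "\<theta>' w = 0" by (simp add: \<theta>'_def)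
  qed
  have T': "(THE \<theta>. Pa f' \<theta>) = \<theta>'" by (rule The_Pa[OF nz' P'])
  show ?thesis
  proof
    fix w :: complex assume w: "w \<in> cball 0 1"
    have "\<bar>Arg (q w)\<bar> = \<bar>Im (Ln (1 + u w))\<bar>" using qnz[OF w] by (simp add: Arg_eq_Im_Ln q_def)
    also have "\<dots> \<le> cmod (Ln (1 + u w))" by (rule abs_Im_le_cmod)
    also have "\<dots> \<le> 2 * cmod (u w)" using ule[OF w] g by (intro norm_Ln_le) simp
    also have "\<dots> \<le> 2 * cmod g" using ule[OF w] by simp
    finally show "\<bar>(THE \<theta>. Pa f' \<theta>) w - (THE \<theta>. Pa f \<theta>) w\<bar> \<le> 2 * cmod g"
      using w by (simp add: T T' \<theta>'_def)
  qed
qed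


lemma trunc_lt1: "\<forall>k. cmod (F k) < 1 \<Longrightarrow> \<forall>k. cmod (trunc F N k) < 1"
  by (simp add: trunc_def)

lemma step_bound:
  assumes F1: "\<forall>k. cmod (F k) < 1" and Fn0: "\<forall>k<n0. F k = 0" and n1: "n \<ge> 1" and nn0: "- n < n0"
    and Fh: "cmod (F n) < 1/2"
  shows "\<forall>z\<in>cball 0 1. \<bar>arg_astar (trunc F n) z - arg_astar (trunc F (n - 1)) z\<bar> \<le> 2 * cmod (F n)"
proof -
  define G' where "G' = trunc F n"
  define G where "G = trunc F (n - 1)"
  have sG': "{i. G' i \<noteq> 0} \<subseteq> {-n..n}" by (auto simp: G'_def trunc_def split: if_splits)
  have sG: "{i. G i \<noteq> 0} \<subseteq> {-n..n}" by (auto simp: G_def trunc_def split: if_splits)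
  have sp: "[-n..n] = [-n..n-1] @ [n]" using n1 by (simp add: upto_rec2)
  have agree: "stp G' z p i = stp G z p i" if "i \<in> set [-n..n-1]" for z p i
  proof -
    have "G' i = G i"
    proof (cases "\<bar>i\<bar> \<le> n - 1")
      case True then show ?thesis using that by (simp add: G'_def G_def trunc_def)
    next
      case False
      then have "i = -n" using that by auto
      then show ?thesis using Fn0 nn0 n1 by (simp add: G'_def G_def trunc_def)
    qed
    then show ?thesis by (simp add: stp_def sc_def)
  qed
  define P where "P z = foldl (stp G z) (1, 0) [-n..n-1]" for z
  have PP': "foldl (stp G' z) (1, 0) [-n..n-1] = P z" for z
    unfolding P_def by (rule foldl_cong) (use agree in auto)
  have Gn: "G n = 0" using n1 by (simp add: G_def trunc_def)
  have scG: "sc G n = 1" using Gn by (simp add: sc_def)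
  have eqG: "nlft_astar G = (\<lambda>z. fst (P z))"
  proof
    fix z show "nlft_astar G z = fst (P z)"
      using astar_eq[OF sG, of z] n1 unfolding sp by (simp add: P_def stp_def scG Gn)
  qed
  obtain t where t: "sc G' n = complex_of_real t" "t > 0" using sc_pos[of G' n] F1 trunc_lt1 G'_def by blast
  have G'n: "G' n = F n" using n1 by (simp add: G'_def trunc_def)
  have eqG': "\<forall>w\<in>cball 0 1. nlft_astar G' w = complex_of_real t * (fst (P w) + F n * snd (P w))"
  proof
    fix w :: complex
    show "nlft_astar G' w = complex_of_real t * (fst (P w) + F n * snd (P w))"
      using astar_eq[OF sG', of w] n1 unfolding sp by (simp add: PP' stp_def t G'n)
  qed
  have Pc: "continuous_on UNIV P" unfolding P_def by (rule fold_cont) simp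
  have fc: "continuous_on (cball 0 1) (\<lambda>z. fst (P z))"
    by (rule continuous_on_subset[of UNIV]) (use Pc in \<open>auto intro: continuous_intros\<close>)
  have bc: "continuous_on (cball 0 1) (\<lambda>z. snd (P z))"
    by (rule continuous_on_subset[of UNIV]) (use Pc in \<open>auto intro: continuous_intros\<close>)
  have G1: "\<forall>k. cmod (G k) < 1" using F1 trunc_lt1 G_def by blast
  have lt: "\<forall>w\<in>cball 0 1. cmod (snd (P w)) < cmod (fst (P w))"
    unfolding P_def using fold_inv[OF _ G1] by simp
  obtain r where r: "r > 0" "P 0 = (complex_of_real r, 0)"
    using fold_zero[OF G1, of 1 "[-n..n-1]"] unfolding P_def by auto
  have "\<forall>w\<in>cball 0 1. \<bar>(THE \<theta>. Pa (nlft_astar G') \<theta>) w - (THE \<theta>. Pa (\<lambda>z. fst (P z)) \<theta>) w\<bar> \<le> 2 * cmod (F n)"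
    by (rule arg_bound[OF fc bc lt _ r(1) _ eqG' t(2) Fh]) (use r in auto)
  then show ?thesis unfolding arg_astar_Pa G'_def[symmetric] G_def[symmetric] eqG .
qed

theorem lemma4p2:
  "\<exists>C::real. \<forall>F :: int \<Rightarrow> complex.
     (\<forall>n. cmod (F n) < 1) \<and> (\<exists>n0. \<forall>n<n0. F n = 0) \<and> (F \<longlongrightarrow> 0) at_top \<longrightarrow>
       (\<exists>N0. \<forall>n\<ge>N0. \<forall>z\<in>cball 0 1.
          \<bar>arg_astar (trunc F n) z - arg_astar (trunc F (n - 1)) z\<bar> \<le> C * cmod (F n)) \<and>
       (\<forall>\<epsilon>>0. \<exists>N0. \<forall>n\<ge>N0. \<forall>z\<in>cball 0 1.
          \<bar>arg_astar (trunc F n) z - arg_astar (trunc F (n - 1)) z\<bar> < \<epsilon>)"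
proof (intro exI[of _ 2] allI impI)
  fix F :: "int \<Rightarrow> complex"
  assume A: "(\<forall>n. cmod (F n) < 1) \<and> (\<exists>n0. \<forall>n<n0. F n = 0) \<and> (F \<longlongrightarrow> 0) at_top"
  then obtain n0 where n0: "\<forall>n<n0. F n = 0" by blast
  have F1: "\<forall>k. cmod (F k) < 1" using A by blast
  have lim: "(F \<longlongrightarrow> 0) at_top" using A by blast
  have ev: "\<exists>N. \<forall>n\<ge>N. cmod (F n) < e" if "e > 0" for e
  proof -
    have "\<forall>\<^sub>F n in at_top. dist (F n) 0 < e" using tendstoD[OF lim that] .
    then show ?thesis unfolding eventually_at_top_linorder by simp
  qed
  obtain N1 where N1: "\<forall>n\<ge>N1. cmod (F n) < 1/2" using ev[of "1/2"] by auto
  define N0 where "N0 = max (max 1 (1 - n0)) N1"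
  have main: "\<forall>z\<in>cball 0 1. \<bar>arg_astar (trunc F n) z - arg_astar (trunc F (n - 1)) z\<bar> \<le> 2 * cmod (F n)"
    if "n \<ge> N0" for n
    by (rule step_bound[OF F1 n0]) (use that N1 in \<open>auto simp: N0_def\<close>)
  show "(\<exists>N0. \<forall>n\<ge>N0. \<forall>z\<in>cball 0 1.
          \<bar>arg_astar (trunc F n) z - arg_astar (trunc F (n - 1)) z\<bar> \<le> 2 * cmod (F n)) \<and>
       (\<forall>\<epsilon>>0. \<exists>N0. \<forall>n\<ge>N0. \<forall>z\<in>cball 0 1.
          \<bar>arg_astar (trunc F n) z - arg_astar (trunc F (n - 1)) z\<bar> < \<epsilon>)"
  proof (intro conjI allI impI)
    show "\<exists>N0. \<forall>n\<ge>N0. \<forall>z\<in>cball 0 1.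
          \<bar>arg_astar (trunc F n) z - arg_astar (trunc F (n - 1)) z\<bar> \<le> 2 * cmod (F n)"
      using main by blast
    fix \<epsilon> :: real assume e: "\<epsilon> > 0"
    obtain N2 where N2: "\<forall>n\<ge>N2. cmod (F n) < \<epsilon>/2" using ev[of "\<epsilon>/2"] e by auto
    show "\<exists>N0. \<forall>n\<ge>N0. \<forall>z\<in>cball 0 1.
          \<bar>arg_astar (trunc F n) z - arg_astar (trunc F (n - 1)) z\<bar> < \<epsilon>"
    proof (intro exI[of _ "max N0 N2"] allI impI ballI)
      fix n z assume n: "max N0 N2 \<le> n" and z: "z \<in> cball (0::complex) 1"
      have "\<bar>arg_astar (trunc F n) z - arg_astar (trunc F (n - 1)) z\<bar> \<le> 2 * cmod (F n)"
        using main[of n] n z by auto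
      also have "\<dots> < \<epsilon>" using N2 n by force
      finally show "\<bar>arg_astar (trunc F n) z - arg_astar (trunc F (n - 1)) z\<bar> < \<epsilon>" .
    qed
  qed
qed

end
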